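(* Let $f:\mathbb{R}^d\to\mathbb{R}$ satisfy: $f$ is continuously differentiable on the level set $L(\mathbf{x}_1)=\{\mathbf{z}: f(\mathbf{z})\le f(\mathbf{x}_1)\}$, bounded below on it, and $\nabla f$ is $L$-Lipschitz on it. Run the Linear UCB Method (described in the context) with regularizer $\lambda>0$ and memory parameter $M\ge 0$. Then for each $k=1,2,\dots,K$ and every $\mathbf{s}\in\mathbb{R}^d$ with $\|\mathbf{s}\|=1$, $$\big|\mathbf{s}^\top(\nabla f(\mathbf{x}_k)-\mathbf{g}_k)\big|\le\sqrt{\frac{d(M+1)}{\lambda}}\sum_{i=\ell(k)}^{k-1}\|\nabla f(\mathbf{x}_i)-\nabla f(\mathbf{x}_{i+1})\|+\sqrt{\lambda}\,\|\nabla f(\mathbf{x}_k)\|\,\|\mathbf{s}\|_{\mathbf{C}_k^{-1}},$$ where $\ell(k):=\max\{1,k-M-1\}$ and the summation is interpreted as $0$ when $k=1$.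
   Context: For a positive definite matrix $\mathbf{A}$, $\|\mathbf{x}\|_{\mathbf{A}}:=(\mathbf{x}^\top\mathbf{A}\mathbf{x})^{1/2}$. Linear UCB Method: inputs are an initial point $\mathbf{x}_1$, horizon $K$, regularizer $\lambda>0$, stepsizes $\alpha_k>0$, and an integer memory parameter $M\ge0$. Initialize $\mathbf{C}_1=\lambda\mathbf{I}_d$, $\mathbf{b}_1=\mathbf{0}$, $\mathbf{g}_1=\mathbf{0}$. For $k=1,\dots,K$: choose some $U_k\ge\|\nabla f(\mathbf{x}_k)\|$; let $\mathbf{s}_k$ be a maximizer of $\mathbf{g}_k^\top\mathbf{s}+\sqrt{\lambda}U_k\|\mathbf{s}\|_{\mathbf{C}_k^{-1}}$ over $\{\mathbf{s}:\|\mathbf{s}\|=1\}$; set $r_k=\langle\nabla f(\mathbf{x}_k),\mathbf{s}_k\rangle$; set $\mathbf{C}_{k+1}=\lambda\mathbf{I}_d+\sum_{j=\max\{1,k-M\}}^{k}\mathbf{s}_j\mathbf{s}_j^\top$, $\mathbf{b}_{k+1}=\sum_{j=\max\{1,k-M\}}^{k}r_j\mathbf{s}_j$, $\mathbf{g}_{k+1}=\mathbf{C}_{k+1}^{-1}\mathbf{b}_{k+1}$; and set $\mathbf{x}_{k+1}=\mathbf{x}_k-\alpha_kr_k\mathbf{s}_k$. *)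

theory Defs
  imports "HOL-Analysis.Analysis"
begin

definition outer :: "real^'n \<Rightarrow> real^'n \<Rightarrow> real^'n^'n" where
  "outer u v = (\<chi> i j. u $ i * v $ j)"

definition anorm :: "real^'n^'n \<Rightarrow> real^'n \<Rightarrow> real" where
  "anorm A x = sqrt (x \<bullet> (A *v x))"

text \<open>Linear UCB quantities, indices starting at 1.
  C_k = lam I + sum_{j = max 1 (k-1-M)}^{k-1} s_j s_j^T   (so C_1 = lam I),
  b_k = sum_{j = max 1 (k-1-M)}^{k-1} r_j s_j             (so b_1 = 0),
  g_k = C_k^{-1} b_k.\<close>
definition ucb_C :: "real \<Rightarrow> nat \<Rightarrow> (nat \<Rightarrow> real^'n) \<Rightarrow> nat \<Rightarrow> real^'n^'n" where
  "ucb_C lam M s k = lam *\<^sub>R mat 1 + (\<Sum>j = max 1 (k - 1 - M)..k - 1. outer (s j) (s j))"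

definition ucb_b :: "nat \<Rightarrow> (nat \<Rightarrow> real^'n) \<Rightarrow> (nat \<Rightarrow> real) \<Rightarrow> nat \<Rightarrow> real^'n" where
  "ucb_b M s r k = (\<Sum>j = max 1 (k - 1 - M)..k - 1. r j *\<^sub>R s j)"

definition ucb_g :: "real \<Rightarrow> nat \<Rightarrow> (nat \<Rightarrow> real^'n) \<Rightarrow> (nat \<Rightarrow> real) \<Rightarrow> nat \<Rightarrow> real^'n" where
  "ucb_g lam M s r k = matrix_inv (ucb_C lam M s k) *v ucb_b M s r k"

end

theory Submission imports Defs begin

lemma sum_mat_vec: "finite S \<Longrightarrow> (sum A S) *v (x::real^'n) = (\<Sum>j\<in>S. A j *v x)"
  by (induction S rule: finite_induct) (auto simp: matrix_vector_mult_add_rdistrib)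

lemma outer_vec: "outer u v *v w = (v \<bullet> w) *\<^sub>R (u::real^'n)"
  by (simp add: vec_eq_iff matrix_vector_mult_def outer_def inner_vec_def sum_distrib_left mult_ac)

lemma ucb_C_vec: "ucb_C lam M s k *v w =
   lam *\<^sub>R w + (\<Sum>j = max 1 (k - 1 - M)..k - 1. (s j \<bullet> w) *\<^sub>R s j)"
  unfolding ucb_C_def
  by (simp add: matrix_vector_mult_add_rdistrib sum_mat_vec outer_vec
      flip: scaleR_matrix_vector_assoc)

lemma ucb_C_sym: "(ucb_C lam M s k *v u) \<bullet> w = u \<bullet> (ucb_C lam M s k *v w)"
  unfolding ucb_C_vec
  by (simp add: inner_add_left inner_add_right inner_sum_left inner_sum_right inner_commute mult.commute)

lemma ucb_C_quad: "u \<bullet> (ucb_C lam M s k *v u) =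
   lam * norm u ^ 2 + (\<Sum>j = max 1 (k - 1 - M)..k - 1. (s j \<bullet> u)^2)"
  unfolding ucb_C_vec power2_norm_eq_inner
  by (simp add: inner_add_right inner_sum_right inner_commute power2_eq_square)

lemma ucb_C_inv:
  assumes "lam > 0"
  shows "ucb_C lam M s k ** matrix_inv (ucb_C lam M s k) = mat 1 \<and> matrix_inv (ucb_C lam M s k) ** ucb_C lam M s k = mat 1"
proof -
  have "\<forall>x. ucb_C lam M s k *v x = 0 \<longrightarrow> x = 0"
  proof (intro allI impI)
    fix x :: "real^'a" assume "ucb_C lam M s k *v x = 0"
    then have "lam * norm x ^ 2 + (\<Sum>j = max 1 (k - 1 - M)..k - 1. (s j \<bullet> x)^2) = 0"
      by (metis ucb_C_quad inner_zero_right)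
    moreover have "(\<Sum>j = max 1 (k - 1 - M)..k - 1. (s j \<bullet> x)^2) \<ge> 0" by (simp add: sum_nonneg)
    ultimately have "lam * norm x ^ 2 \<le> 0" by linarith
    with assms show "x = 0"
      by (simp add: mult_le_0_iff)
  qed
  then have "invertible (ucb_C lam M s k)"
    using matrix_left_invertible_ker invertible_left_inverse by blast
  then show ?thesis unfolding invertible_def matrix_inv_def by (rule someI_ex)
qed

theorem lemma3:
  fixes f :: "real^'n \<Rightarrow> real" and G :: "real^'n \<Rightarrow> real^'n"
    and x s :: "nat \<Rightarrow> real^'n" and r U \<alpha> :: "nat \<Rightarrow> real"
    and K M :: nat and lam Lc :: real
  assumes diff: "\<forall>z\<in>{z. f z \<le> f (x 1)}. (f has_derivative (\<lambda>h. G z \<bullet> h)) (at z)"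
    and cont: "continuous_on {z. f z \<le> f (x 1)} G"
    and bdd: "bdd_below (f ` {z. f z \<le> f (x 1)})"
    and lip: "\<forall>y\<in>{z. f z \<le> f (x 1)}. \<forall>z\<in>{z. f z \<le> f (x 1)}. norm (G y - G z) \<le> Lc * norm (y - z)"
    and lam_pos: "lam > 0"
    and alpha_pos: "\<forall>k\<in>{1..K}. \<alpha> k > 0"
    and U_ge: "\<forall>k\<in>{1..K}. U k \<ge> norm (G (x k))"
    and s_unit: "\<forall>k\<in>{1..K}. norm (s k) = 1"
    and s_max: "\<forall>k\<in>{1..K}. \<forall>t. norm t = 1 \<longrightarrow>
        ucb_g lam M s r k \<bullet> t + sqrt lam * U k * anorm (matrix_inv (ucb_C lam M s k)) t
        \<le> ucb_g lam M s r k \<bullet> s k + sqrt lam * U k * anorm (matrix_inv (ucb_C lam M s k)) (s k)"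
    and r_def: "\<forall>k\<in>{1..K}. r k = G (x k) \<bullet> s k"
    and x_step: "\<forall>k\<in>{1..K}. x (k + 1) = x k - (\<alpha> k * r k) *\<^sub>R s k"
  shows "\<forall>k\<in>{1..K}. \<forall>t::real^'n. norm t = 1 \<longrightarrow>
    \<bar>t \<bullet> (G (x k) - ucb_g lam M s r k)\<bar>
      \<le> sqrt (real CARD('n) * (real M + 1) / lam)
          * (\<Sum>i = max 1 (k - M - 1)..k - 1. norm (G (x i) - G (x (i + 1))))
        + sqrt lam * norm (G (x k)) * anorm (matrix_inv (ucb_C lam M s k)) t"
proof (intro ballI allI impI)
  fix k t assume kK: "k \<in> {1..K}" and tn: "norm (t::real^'n) = 1"
  define J where "J = {max 1 (k - 1 - M)..k - 1}"
  define C where "C = ucb_C lam M s k"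
  define Ci where "Ci = matrix_inv C"
  define gs where "gs = G (x k)"
  define u where "u = Ci *v t"
  define D where "D = (\<Sum>j\<in>J. ((G (x j) - gs) \<bullet> s j) *\<^sub>R s j)"
  define Q where "Q = (\<Sum>j\<in>J. (s j \<bullet> u)^2)"
  define S where "S = (\<Sum>i = max 1 (k - M - 1)..k - 1. norm (G (x i) - G (x (i + 1))))"
  have inv: "C ** Ci = mat 1" "Ci ** C = mat 1"
    using ucb_C_inv[OF lam_pos, of M s k] by (auto simp: C_def Ci_def)
  have CCi: "C *v (Ci *v v) = v" for v
    by (simp add: matrix_vector_mul_assoc inv)
  have tCu: "t = C *v u" by (simp add: u_def CCi)
  have key: "t \<bullet> (Ci *v y) = u \<bullet> y" for y
    using ucb_C_sym[of lam M s k u "Ci *v y"] by (simp add: tCu CCi flip: C_def)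
  have Jsub: "j \<in> {1..K}" if "j \<in> J" for j using that kK by (auto simp: J_def)
  have rJ: "r j = G (x j) \<bullet> s j" if "j \<in> J" for j using r_def Jsub[OF that] by blast
  have b_eq: "ucb_b M s r k = C *v gs - lam *\<^sub>R gs + D"
  proof -
    have "ucb_b M s r k = (\<Sum>j\<in>J. (gs \<bullet> s j) *\<^sub>R s j + ((G (x j) - gs) \<bullet> s j) *\<^sub>R s j)"
      unfolding ucb_b_def J_def[symmetric]
      by (rule sum.cong) (auto simp: rJ inner_diff_left scaleR_diff_left)
    also have "\<dots> = (\<Sum>j\<in>J. (s j \<bullet> gs) *\<^sub>R s j) + D"
      by (simp add: sum.distrib D_def inner_commute)
    also have "(\<Sum>j\<in>J. (s j \<bullet> gs) *\<^sub>R s j) = C *v gs - lam *\<^sub>R gs"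
      by (simp add: C_def ucb_C_vec J_def)
    finally show ?thesis .
  qed
  have tg: "t \<bullet> ucb_g lam M s r k = t \<bullet> gs - lam * (u \<bullet> gs) + u \<bullet> D"
  proof -
    have "t \<bullet> ucb_g lam M s r k = u \<bullet> ucb_b M s r k"
      by (simp add: ucb_g_def key flip: C_def Ci_def)
    also have "\<dots> = u \<bullet> (C *v gs) - lam * (u \<bullet> gs) + u \<bullet> D"
      by (simp add: b_eq inner_add_right inner_diff_right)
    also have "u \<bullet> (C *v gs) = t \<bullet> gs"
      by (simp add: tCu C_def ucb_C_sym)
    finally show ?thesis .
  qed
  have main: "t \<bullet> (gs - ucb_g lam M s r k) = lam * (u \<bullet> gs) - u \<bullet> D"
    using tg by (simp add: inner_diff_right)
  have quad: "t \<bullet> u = lam * norm u ^ 2 + Q"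
    using ucb_C_quad[of u lam M s k] by (simp add: tCu inner_commute[of "C *v u"] Q_def J_def flip: C_def)
  have Qnn: "Q \<ge> 0" by (simp add: Q_def sum_nonneg)
  have tu: "t \<bullet> u \<le> norm u"
    using Cauchy_Schwarz_ineq2[of t u] tn by simp
  have lu: "lam * norm u ^ 2 \<le> t \<bullet> u" using quad Qnn by simp
  have lu1: "lam * norm u \<le> 1"
  proof (cases "u = 0")
    case False
    then have "norm u > 0" by simp
    have "lam * norm u * norm u \<le> 1 * norm u" using lu tu by (simp add: power2_eq_square mult.assoc)
    with \<open>norm u > 0\<close> show ?thesis by (meson mult_le_cancel_right_pos)
  qed simp
  have Qb: "Q \<le> 1 / lam"
  proof -
    have "lam * norm u ^ 2 \<ge> 0" using lam_pos by simp
    then have "Q \<le> norm u" using quad tu by linarith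
    also have "\<dots> \<le> 1 / lam" using lu1 lam_pos by (simp add: field_simps)
    finally show ?thesis .
  qed
  have anorm_eq: "anorm (matrix_inv (ucb_C lam M s k)) t = sqrt (t \<bullet> u)"
    by (simp add: anorm_def u_def Ci_def C_def)
  have term1: "\<bar>lam * (u \<bullet> gs)\<bar> \<le> sqrt lam * norm gs * sqrt (t \<bullet> u)"
  proof -
    have c1: "\<bar>lam * (u \<bullet> gs)\<bar> \<le> lam * norm u * norm gs"
      using Cauchy_Schwarz_ineq2[of u gs] lam_pos by (simp add: abs_mult)
    have "lam * norm u = sqrt ((lam * norm u)^2)" using lam_pos by simp
    also have "\<dots> \<le> sqrt (lam * (t \<bullet> u))"
      using lu lam_pos by (intro real_sqrt_le_mono) (simp add: power2_eq_square mult_left_mono mult_ac)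
    also have "\<dots> = sqrt lam * sqrt (t \<bullet> u)" by (simp add: real_sqrt_mult)
    finally have c2: "lam * norm u \<le> sqrt lam * sqrt (t \<bullet> u)" .
    have "lam * norm u * norm gs \<le> sqrt lam * sqrt (t \<bullet> u) * norm gs"
      by (rule mult_right_mono[OF c2]) simp
    with c1 show ?thesis by (simp add: mult_ac)
  qed
  have Sb: "norm (G (x j) - gs) \<le> S" if "j \<in> J" for j
  proof -
    have jk: "j \<le> k - 1" "1 \<le> j" using that by (auto simp: J_def)
    have "G (x j) - gs = (\<Sum>i = j..k - 1. (- G (x (Suc i))) - (- G (x i)))"
      using jk sum_Suc_diff[of j "k - 1" "\<lambda>i. - G (x i)"] kK by (simp add: gs_def)
    also have "norm \<dots> \<le> (\<Sum>i = j..k - 1. norm (G (x i) - G (x (i + 1))))"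
      by (rule order_trans[OF norm_sum]) (simp add: norm_minus_commute)
    also have "\<dots> \<le> S" unfolding S_def
      using that by (intro sum_mono2) (auto simp: J_def)
    finally show ?thesis .
  qed
  have term2: "\<bar>u \<bullet> D\<bar> \<le> S * sqrt (real CARD('n) * (real M + 1) / lam)"
  proof -
    have "\<bar>u \<bullet> D\<bar> = \<bar>\<Sum>j\<in>J. ((G (x j) - gs) \<bullet> s j) * (s j \<bullet> u)\<bar>"
      by (simp add: D_def inner_sum_right inner_commute)
    also have "\<dots> \<le> (\<Sum>j\<in>J. \<bar>((G (x j) - gs) \<bullet> s j) * (s j \<bullet> u)\<bar>)"
      by (rule sum_abs)
    also have "\<dots> \<le> (\<Sum>j\<in>J. S * \<bar>s j \<bullet> u\<bar>)"
    proof (rule sum_mono)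
      fix j assume jJ: "j \<in> J"
      have "\<bar>(G (x j) - gs) \<bullet> s j\<bar> \<le> norm (G (x j) - gs) * norm (s j)"
        by (rule Cauchy_Schwarz_ineq2)
      also have "\<dots> \<le> S" using Sb[OF jJ] s_unit Jsub[OF jJ] by simp
      finally show "\<bar>((G (x j) - gs) \<bullet> s j) * (s j \<bullet> u)\<bar> \<le> S * \<bar>s j \<bullet> u\<bar>"
        by (simp add: abs_mult mult_right_mono)
    qed
    also have "\<dots> = S * (\<Sum>j\<in>J. \<bar>s j \<bullet> u\<bar>)" by (simp add: sum_distrib_left)
    also have "(\<Sum>j\<in>J. \<bar>s j \<bullet> u\<bar>) \<le> sqrt (real CARD('n) * (real M + 1) / lam)"
    proof -
      have "(\<Sum>j\<in>J. \<bar>s j \<bullet> u\<bar>)^2 \<le> Q * card J"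
        using sum_squared_le_sum_of_squares[of "\<lambda>j. \<bar>s j \<bullet> u\<bar>" J] by (simp add: Q_def)
      also have "\<dots> \<le> (1 / lam) * (real M + 1)"
      proof (rule mult_mono)
        show "real (card J) \<le> real M + 1" by (simp add: J_def)
      qed (use Qb Qnn lam_pos in auto)
      also have "\<dots> \<le> real CARD('n) * (real M + 1) / lam"
      proof -
        have "0 < CARD('n)" by simp
        then have "1 * (real M + 1) \<le> real CARD('n) * (real M + 1)"
          by (intro mult_right_mono) auto
        then show ?thesis using lam_pos by (simp add: divide_right_mono)
      qed
      finally show ?thesis by (rule real_le_rsqrt)
    qed
    then have "S * (\<Sum>j\<in>J. \<bar>s j \<bullet> u\<bar>) \<le> S * sqrt (real CARD('n) * (real M + 1) / lam)"
      by (rule mult_left_mono) (simp add: S_def sum_nonneg)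
    finally show ?thesis .
  qed
  show "\<bar>t \<bullet> (G (x k) - ucb_g lam M s r k)\<bar>
      \<le> sqrt (real CARD('n) * (real M + 1) / lam)
          * (\<Sum>i = max 1 (k - M - 1)..k - 1. norm (G (x i) - G (x (i + 1))))
        + sqrt lam * norm (G (x k)) * anorm (matrix_inv (ucb_C lam M s k)) t"
    unfolding gs_def[symmetric] main anorm_eq S_def[symmetric]
    using term1 term2 abs_triangle_ineq4[of "lam * (u \<bullet> gs)" "u \<bullet> D"] by (simp add: mult_ac)
qed

end
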